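(* Suppose (A1)–(A7) hold (see context). Let $\varpi^*=\mathrm{col}(\hat{\boldsymbol{x}}^*,\boldsymbol{z}^*,\boldsymbol{\lambda}^*,\boldsymbol{\mu}^* )\in\mathrm{zer}(\mathcal{A}+\mathcal{B})$ (equivalently $\varpi^*=\mathcal{T}\varpi^*$ with $\mathcal{T}$ as in the context). Then $\hat{\boldsymbol{x}}^*=\mathbf{1}_n\otimes\boldsymbol{x}^*$ for some $\boldsymbol{x}^*\in\mathbb{R}^q$, $\boldsymbol{\mu}^*=\mathbf{1}_m\otimes\mu^*$ for some $\mu^*\in\mathbb{R}^w$, and $$\mathbf{0}_{nq}\in R^T\boldsymbol{F}(\hat{\boldsymbol{x}}^* )+R^TH(R\hat{\boldsymbol{x}}^* )+R^T\boldsymbol{L}\boldsymbol{\lambda}^*+R^T\boldsymbol{\Lambda}^T\boldsymbol{\mu}^*,\quad \mathbf{0}_w\in b-\boldsymbol{A}R\hat{\boldsymbol{x}}^*+N_{\mathbb{R}^w_+}(\mu^* ),\quad \mathbf{0}=\boldsymbol{L}R\hat{\boldsymbol{x}}^*;$$ moreover $(\boldsymbol{x}^*,\boldsymbol{\lambda}^*,\mu^* )$ satisfies $$\mathbf{0}_q\in F(\boldsymbol{x}^* )+H(\boldsymbol{x}^* )+\boldsymbol{L}\boldsymbol{\lambda}^*+\boldsymbol{A}^T\mu^*,\quad \mathbf{0}_w\in b-\boldsymbol{A}\boldsymbol{x}^*+N_{\mathbb{R}^w_+}(\mu^* ),\quad \mathbf{0}_q=\boldsymbol{L}\boldsymbol{x}^*.$$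 Consequently $\boldsymbol{x}^*$ solves $\mathrm{GVI}(\Theta,\mathcal{K})$ and is a v-GNE of the multi-cluster game (both in the full-information and the partial-information formulation).
   Context: Setting. There are $m$ clusters; cluster $j$ has $n_j$ agents; agent $i$ of cluster $j$ chooses $x_i^j\in\mathbb{R}^{q_j}$; $x^j=\mathrm{col}(x_1^j,\dots,x_{n_j}^j)$, $\boldsymbol{x}=\mathrm{col}(x^1,\dots,x^m)\in\mathbb{R}^q$, $q=\sum_jn_jq_j$, $n=\sum_jn_j$; $\boldsymbol{x}^{-j}$ is $\boldsymbol{x}$ without block $x^j$. Agent cost $\theta_i^j=f_i^j(x^j,\boldsymbol{x}^{-j})+h_i^j(x_i^j)$, $f^j=\sum_if_i^j$, $h^j(x^j)=\sum_ih_i^j(x_i^j)$. Coupling: $A^j\in\mathbb{R}^{w\times q_j}$, $b^j\in\mathbb{R}^w$, $b=\sum_jb^j$, $\boldsymbol{A}^j=[A^j,\mathbf{0}_{w\times(n_jq_j-q_j)}]$, $\boldsymbol{A}=[\boldsymbol{A}^1,\dots,\boldsymbol{A}^m]$, $\boldsymbol{\Lambda}=\mathrm{blockdiag}(\boldsymbol{A}^1,\dots,\boldsymbol{A}^m)\in\mathbb{R}^{wm\times q}$, $\boldsymbol{b}=\mathrm{col}(b^1,\dots,b^m)$. Graphs: $\mathcal{G}^j$ undirected weighted graph on cluster $j$ with Laplacian $L^j$; $\mathcal{G}_L$ undirected weighted graph on the leaders (agent 1 of each cluster) with weights $w^{j,l}_{1,1}$ and Laplacian $L^0_m\in\mathbb{R}^{m\times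 m}$. $\boldsymbol{L}^j=L^j\otimes I_{q_j}$, $\boldsymbol{L}=\mathrm{blockdiag}(\boldsymbol{L}^j)\in\mathbb{R}^{q\times q}$, $L=\mathrm{blockdiag}(L^1,\dots,L^m)\in\mathbb{R}^{n\times n}$, $\hat{\boldsymbol{L}}=L\otimes I_q$, $\boldsymbol{L}^0_m=L^0_m\otimes I_w$; $\hat L^0_m\in\mathbb{R}^{n\times n}$ is partitioned into blocks of size $n_j\times n_l$, block $(j,l)$, $j\ne l$, having $(1,1)$ entry $-w^{j,l}_{1,1}$ and zeros elsewhere, block $(j,j)$ having $(1,1)$ entry $\sum_{l\ne j}w^{j,l}_{1,1}$ and zeros elsewhere; $\hat{\boldsymbol{L}}^0_m=\hat L^0_m\otimes I_q$. $s_2$, $s_{\max}$ denote second-smallest and largest eigenvalue. Feasible set $\mathcal{K}=\{\boldsymbol{x}\in\prod\Omega_i^j:\sum_jA^jx_1^j\le b,\ x_i^j=x_l^j\ \forall j,i,l\}$, $\Omega_i^j=\mathrm{dom}\,h_i^j$. $F(\boldsymbol{x})=\mathrm{col}(\nabla_{x^j}f^j(x^j,\boldsymbol{x}^{-j}))_j$, $H(\boldsymbol{x})=\partial h^1(x^1)\times\dots\times\partial h^m(x^m)$, $\Theta=F+H$; $\mathrm{GVI}(\Theta,\mathcal{K})$: find $\boldsymbol{x}^*\in\mathcal{K}$, $g\in\Theta(\boldsymbol{x}^* )$ with $\langle g,\boldsymbol{x}-\boldsymbol{x}^*\rangle\ge0\ \forall\boldsymbol{x}\in\mathcal{K}$;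 a v-GNE is a solution of this GVI. Partial information: agent $(j,i)$ holds an estimate $\hat{\boldsymbol{x}}_i^j\in\mathbb{R}^q$ of the whole profile whose cluster-$j$ block is the true $x^j$; $\hat{\boldsymbol{x}}=\mathrm{col}(\hat{\boldsymbol{x}}_i^j)\in\mathbb{R}^{nq}$ (ordered by $j$ then $i$); $\hat{\boldsymbol{x}}_i^{j,-j}$ is $\hat{\boldsymbol{x}}_i^j$ with the cluster-$j$ block removed; $R_i^j\in\mathbb{R}^{q_j\times q}$ extracts $x_i^j$ from $\hat{\boldsymbol{x}}_i^j$ and $R=\mathrm{blockdiag}(R_i^j)\in\mathbb{R}^{q\times nq}$, so $R\hat{\boldsymbol{x}}=\boldsymbol{x}$. Extended pseudo-gradient $\boldsymbol{F}(\hat{\boldsymbol{x}})=\mathrm{col}\big(\nabla_{x^j}\sum_if_i^j(x^j,\hat{\boldsymbol{x}}_i^{j,-j})\big)_j\in\mathbb{R}^q$. Operators: fix $c>0$ and positive step sizes $\rho_i^j,\tau_i^j,\sigma^j,\nu^j$; $\boldsymbol{\rho}=\mathrm{diag}(\rho_i^jI_q)$, $\boldsymbol{\sigma}=\mathrm{diag}(\sigma^jI_w)$, $\boldsymbol{\tau}=\mathrm{diag}(\tau_i^jI_{q_j})$, $\boldsymbol{\nu}=\mathrm{diag}(\nu^jI_w)$. Variable $\varpi=\mathrm{col}(\hat{\boldsymbol{x}},\boldsymbol{z},\boldsymbol{\lambda},\boldsymbol{\mu})\in\mathbb{R}^{nq}\times\mathbb{R}^{wm}\times\mathbb{R}^q\times\mathbb{R}^{wm}$.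 $\Psi=\mathrm{diag}(\boldsymbol{\rho}^{-1},\boldsymbol{\sigma}^{-1},\boldsymbol{\tau}^{-1},\boldsymbol{\nu}^{-1})$; $\Phi=\begin{bmatrix}0&0&R^T\boldsymbol{L}^T&R^T\boldsymbol{\Lambda}^T\\0&0&0&\boldsymbol{L}^0_m\\-\boldsymbol{L}R&0&0&0\\-\boldsymbol{\Lambda}R&-\boldsymbol{L}^0_m&0&0\end{bmatrix}$; $\mathcal{A}(\varpi)=\mathrm{col}(R^T\boldsymbol{F}(\hat{\boldsymbol{x}})+c(\hat{\boldsymbol{L}}+\hat{\boldsymbol{L}}^0_m)\hat{\boldsymbol{x}},\mathbf{0}_{wm},\mathbf{0}_q,\boldsymbol{b})+\Phi\varpi$; $\mathcal{B}(\varpi)=R^TH(R\hat{\boldsymbol{x}})\times\{\mathbf{0}_{wm}\}\times\{\mathbf{0}_q\}\times N_{\mathbb{R}^{wm}_+}(\boldsymbol{\mu})$, where $R^TH(R\hat{\boldsymbol{x}})=\{R^Tv:v\in H(R\hat{\boldsymbol{x}})\}$. $\mathcal{T}:=\Psi^{-1}\mathcal{A}+(\mathrm{Id}-\Psi^{-1}\mathcal{A})\circ(\mathrm{Id}+\Psi^{-1}\mathcal{B})^{-1}\circ(\mathrm{Id}-\Psi^{-1}\mathcal{A})$. Let $\ell_{\mathcal{A}}=\kappa+c(s_{\max}(L)+s_{\max}(L^0_m))+2s_{\max}(L)+2s_{\max}(L^0_m)+2\max_j\sigma_{\max}(A^j)$. Assumptions: (A1) each $f_i^j(\cdot,\boldsymbol{x}^{-j})$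 convex and $C^1$, each $h_i^j$ lsc convex with $\mathrm{dom}\,h_i^j$ nonempty compact convex; (A2) $\mathcal{K}$ nonempty, Slater's condition holds; (A3) every $\mathcal{G}^j$ and $\mathcal{G}_L$ connected; (A4) $F$ is $\eta$-strongly monotone and $\kappa_0$-Lipschitz; (A5) $\mathrm{GVI}(\Theta,\mathcal{K})$ has a solution; (A6) $\boldsymbol{F}$ is $\kappa$-Lipschitz; (A7) $\Psi\succ0$ and $\|\Psi^{-1}\|<1/\ell_{\mathcal{A}}$. *)

theory Defs
  imports "HOL-Analysis.Analysis"
begin

text \<open>
Clusters j < m; cluster j has n j agents i < n j (agent 0 is the leader, the paper's agent 1);
  agent (j,i) decides a vector in R^(qd j), coordinates k < qd j; coupling constraints have w rows.
  A profile x in R^q is a function on index triples (j,i,k) (only the index set PI matters).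
  An estimate profile xh in R^(nq) maps an agent (j,i) to its estimate in R^q.
  Vectors z, mu in R^(wm) are functions of (j,r), j < m, r < w; vectors in R^w are functions of r.
  Vectors in R^(qd j) are functions nat => real vanishing for k >= qd j.
\<close>

type_synonym prof = "nat \<times> nat \<times> nat \<Rightarrow> real"
type_synonym est = "nat \<times> nat \<Rightarrow> prof"
type_synonym cwvec = "nat \<times> nat \<Rightarrow> real"

definition PI :: "nat \<Rightarrow> (nat \<Rightarrow> nat) \<Rightarrow> (nat \<Rightarrow> nat) \<Rightarrow> (nat \<times> nat \<times> nat) set" where
  "PI m n qd = {(j,i,k). j < m \<and> i < n j \<and> k < qd j}"

definition Ag :: "nat \<Rightarrow> (nat \<Rightarrow> nat) \<Rightarrow> (nat \<times> nat) set" where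
  "Ag m n = {(j,i). j < m \<and> i < n j}"

definition CW :: "nat \<Rightarrow> nat \<Rightarrow> (nat \<times> nat) set" where
  "CW m w = {(j,r). j < m \<and> r < w}"

definition EI :: "nat \<Rightarrow> (nat \<Rightarrow> nat) \<Rightarrow> (nat \<Rightarrow> nat) \<Rightarrow> ((nat \<times> nat) \<times> (nat \<times> nat \<times> nat)) set" where
  "EI m n qd = Ag m n \<times> PI m n qd"

definition ip :: "'a set \<Rightarrow> ('a \<Rightarrow> real) \<Rightarrow> ('a \<Rightarrow> real) \<Rightarrow> real" where
  "ip I u v = (\<Sum>a\<in>I. u a * v a)"

definition vnorm :: "'a set \<Rightarrow> ('a \<Rightarrow> real) \<Rightarrow> real" where
  "vnorm I u = sqrt (\<Sum>a\<in>I. (u a)\<^sup>2)"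

definition flat :: "est \<Rightarrow> (nat \<times> nat) \<times> (nat \<times> nat \<times> nat) \<Rightarrow> real" where
  "flat xh = (\<lambda>(a,p). xh a p)"

definition ugraph :: "nat \<Rightarrow> (nat \<Rightarrow> nat \<Rightarrow> real) \<Rightarrow> bool" where
  "ugraph N W \<longleftrightarrow> (\<forall>i<N. \<forall>l<N. W i l \<ge> 0 \<and> W i l = W l i) \<and> (\<forall>i<N. W i i = 0)"

definition graph_connected :: "nat \<Rightarrow> (nat \<Rightarrow> nat \<Rightarrow> real) \<Rightarrow> bool" where
  "graph_connected N W \<longleftrightarrow>
     (\<forall>i<N. \<forall>l<N. (i,l) \<in> {(a,b). a < N \<and> b < N \<and> W a b > 0}\<^sup>*)"

definition lap :: "nat \<Rightarrow> (nat \<Rightarrow> nat \<Rightarrow> real) \<Rightarrow> nat \<Rightarrow> nat \<Rightarrow> real" where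
  "lap N W i l = (if i = l then (\<Sum>l'\<in>{..<N} - {i}. W i l') else - W i l)"

text \<open>Block-diagonal Laplacian L = blockdiag(L^1,...,L^m) on the agent set.\<close>
definition Lbig :: "(nat \<Rightarrow> nat) \<Rightarrow> (nat \<Rightarrow> nat \<Rightarrow> nat \<Rightarrow> real) \<Rightarrow> nat \<times> nat \<Rightarrow> nat \<times> nat \<Rightarrow> real" where
  "Lbig n W a b = (if fst a = fst b then lap (n (fst a)) (W (fst a)) (snd a) (snd b) else 0)"

text \<open>bold L = blockdiag(L^j \<otimes> I_{q_j}) on R^q\<close>
definition Lop :: "(nat \<Rightarrow> nat) \<Rightarrow> (nat \<Rightarrow> nat \<Rightarrow> nat \<Rightarrow> real) \<Rightarrow> prof \<Rightarrow> prof" where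
  "Lop n W v = (\<lambda>(j,i,k). \<Sum>l<n j. lap (n j) (W j) i l * v (j,l,k))"

definition LopT :: "(nat \<Rightarrow> nat) \<Rightarrow> (nat \<Rightarrow> nat \<Rightarrow> nat \<Rightarrow> real) \<Rightarrow> prof \<Rightarrow> prof" where
  "LopT n W v = (\<lambda>(j,i,k). \<Sum>l<n j. lap (n j) (W j) l i * v (j,l,k))"

text \<open>bold L^0_m = L^0_m \<otimes> I_w on R^(wm)\<close>
definition L0op :: "nat \<Rightarrow> (nat \<Rightarrow> nat \<Rightarrow> real) \<Rightarrow> cwvec \<Rightarrow> cwvec" where
  "L0op m WL u = (\<lambda>(j,r). \<Sum>l<m. lap m WL j l * u (l,r))"

text \<open>bold Lambda = blockdiag(bold A^1,...,bold A^m) : R^q \<rightarrow> R^(wm) and its transpose\<close>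
definition Lamop :: "(nat \<Rightarrow> nat) \<Rightarrow> (nat \<Rightarrow> nat \<Rightarrow> nat \<Rightarrow> real) \<Rightarrow> prof \<Rightarrow> cwvec" where
  "Lamop qd A x = (\<lambda>(j,r). \<Sum>k<qd j. A j r k * x (j,0,k))"

definition LamT :: "nat \<Rightarrow> (nat \<Rightarrow> nat \<Rightarrow> nat \<Rightarrow> real) \<Rightarrow> cwvec \<Rightarrow> prof" where
  "LamT w A u = (\<lambda>(j,i,k). if i = 0 then (\<Sum>r<w. A j r k * u (j,r)) else 0)"

text \<open>bold A = [bold A^1,...,bold A^m] : R^q \<rightarrow> R^w and its transpose\<close>
definition Aop :: "nat \<Rightarrow> (nat \<Rightarrow> nat) \<Rightarrow> (nat \<Rightarrow> nat \<Rightarrow> nat \<Rightarrow> real) \<Rightarrow> prof \<Rightarrow> nat \<Rightarrow> real" where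
  "Aop m qd A x = (\<lambda>r. \<Sum>j<m. \<Sum>k<qd j. A j r k * x (j,0,k))"

definition AT :: "nat \<Rightarrow> (nat \<Rightarrow> nat \<Rightarrow> nat \<Rightarrow> real) \<Rightarrow> (nat \<Rightarrow> real) \<Rightarrow> prof" where
  "AT w A u = (\<lambda>(j,i,k). if i = 0 then (\<Sum>r<w. A j r k * u r) else 0)"

definition bsum :: "nat \<Rightarrow> (nat \<Rightarrow> nat \<Rightarrow> real) \<Rightarrow> nat \<Rightarrow> real" where
  "bsum m b = (\<lambda>r. \<Sum>j<m. b j r)"

text \<open>R : R^(nq) \<rightarrow> R^q (R xh = x) and its transpose\<close>
definition Rop :: "est \<Rightarrow> prof" where
  "Rop xh = (\<lambda>(j,i,k). xh (j,i) (j,i,k))"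

definition RT :: "prof \<Rightarrow> est" where
  "RT v = (\<lambda>(j,i) (j',i',k). if j' = j \<and> i' = i then v (j,i,k) else 0)"

text \<open>hat L = L \<otimes> I_q and hat L^0_m = hat L^0_m \<otimes> I_q on R^(nq)\<close>
definition Lhat :: "(nat \<Rightarrow> nat) \<Rightarrow> (nat \<Rightarrow> nat \<Rightarrow> nat \<Rightarrow> real) \<Rightarrow> est \<Rightarrow> est" where
  "Lhat n W xh = (\<lambda>(j,i) p. \<Sum>l<n j. lap (n j) (W j) i l * xh (j,l) p)"

definition L0hat :: "nat \<Rightarrow> (nat \<Rightarrow> nat \<Rightarrow> real) \<Rightarrow> est \<Rightarrow> est" where
  "L0hat m WL xh = (\<lambda>(j,i) p. if i = 0 then (\<Sum>l<m. lap m WL j l * xh (l,0) p) else 0)"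

definition pd :: "(prof \<Rightarrow> real) \<Rightarrow> prof \<Rightarrow> nat \<times> nat \<times> nat \<Rightarrow> real" where
  "pd g x p = deriv (\<lambda>t. g (x(p := x p + t))) 0"

text \<open>Pseudo-gradient F(x) = col_j (nabla_{x^j} f^j(x^j, x^{-j})).\<close>
definition Fop :: "(nat \<Rightarrow> nat) \<Rightarrow> (nat \<Rightarrow> nat \<Rightarrow> prof \<Rightarrow> real) \<Rightarrow> prof \<Rightarrow> prof" where
  "Fop n f x = (\<lambda>(j,i,k). \<Sum>i'<n j. pd (f j i') x (j,i,k))"

text \<open>The profile (x^j, hat x_i^{j,-j}) with x^j the true action of cluster j.\<close>
definition estpt :: "est \<Rightarrow> nat \<Rightarrow> nat \<Rightarrow> prof" where
  "estpt xh j i = (\<lambda>(j',i',k). if j' = j then xh (j,i') (j,i',k) else xh (j,i) (j',i',k))"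

text \<open>Extended pseudo-gradient bold F(hat x) = col_j (nabla_{x^j} sum_i f_i^j(x^j, hat x_i^{j,-j})).\<close>
definition Fbold :: "(nat \<Rightarrow> nat) \<Rightarrow> (nat \<Rightarrow> nat \<Rightarrow> prof \<Rightarrow> real) \<Rightarrow> est \<Rightarrow> prof" where
  "Fbold n f xh = (\<lambda>(j,i,k). \<Sum>i'<n j. pd (f j i') (estpt xh j i') (j,i,k))"

definition blk :: "(nat \<Rightarrow> nat) \<Rightarrow> prof \<Rightarrow> nat \<Rightarrow> nat \<Rightarrow> nat \<Rightarrow> real" where
  "blk qd x j i = (\<lambda>k. if k < qd j then x (j,i,k) else 0)"

text \<open>h_i^j is the proper function equal to h j i on Omega j i and +infinity elsewhere.
  H(x) = dh^1(x^1) x ... x dh^m(x^m), h^j(x^j) = sum_i h_i^j(x_i^j), dom h^j = prod_i Omega_i^j.\<close>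
definition Hset :: "nat \<Rightarrow> (nat \<Rightarrow> nat) \<Rightarrow> (nat \<Rightarrow> nat) \<Rightarrow> (nat \<Rightarrow> nat \<Rightarrow> (nat \<Rightarrow> real) \<Rightarrow> real)
    \<Rightarrow> (nat \<Rightarrow> nat \<Rightarrow> (nat \<Rightarrow> real) set) \<Rightarrow> prof \<Rightarrow> prof set" where
  "Hset m n qd h \<Omega> x = {g. \<forall>j<m.
      (\<forall>i<n j. blk qd x j i \<in> \<Omega> j i) \<and>
      (\<forall>y. (\<forall>i<n j. blk qd y j i \<in> \<Omega> j i) \<longrightarrow>
          (\<Sum>i<n j. h j i (blk qd y j i)) \<ge> (\<Sum>i<n j. h j i (blk qd x j i))
             + (\<Sum>i<n j. \<Sum>k<qd j. g (j,i,k) * (y (j,i,k) - x (j,i,k))))}"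

definition normal_cone :: "'a set \<Rightarrow> ('a \<Rightarrow> real) set \<Rightarrow> ('a \<Rightarrow> real) \<Rightarrow> ('a \<Rightarrow> real) set" where
  "normal_cone I C u = {v. u \<in> C \<and> (\<forall>y\<in>C. (\<Sum>a\<in>I. v a * (y a - u a)) \<le> 0)}"

definition orthant :: "'a set \<Rightarrow> ('a \<Rightarrow> real) set" where
  "orthant I = {u. \<forall>a\<in>I. u a \<ge> 0}"

definition Kset :: "nat \<Rightarrow> (nat \<Rightarrow> nat) \<Rightarrow> (nat \<Rightarrow> nat) \<Rightarrow> nat \<Rightarrow> (nat \<Rightarrow> nat \<Rightarrow> nat \<Rightarrow> real)
    \<Rightarrow> (nat \<Rightarrow> nat \<Rightarrow> real) \<Rightarrow> (nat \<Rightarrow> nat \<Rightarrow> (nat \<Rightarrow> real) set) \<Rightarrow> prof set" where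
  "Kset m n qd w A b \<Omega> = {x.
      (\<forall>j<m. \<forall>i<n j. blk qd x j i \<in> \<Omega> j i) \<and>
      (\<forall>r<w. Aop m qd A x r \<le> bsum m b r) \<and>
      (\<forall>j<m. \<forall>i<n j. \<forall>l<n j. blk qd x j i = blk qd x j l)}"

definition GVI_sol :: "nat \<Rightarrow> (nat \<Rightarrow> nat) \<Rightarrow> (nat \<Rightarrow> nat) \<Rightarrow> (prof \<Rightarrow> prof) \<Rightarrow> (prof \<Rightarrow> prof set)
    \<Rightarrow> prof set \<Rightarrow> prof \<Rightarrow> bool" where
  "GVI_sol m n qd F H K xs \<longleftrightarrow> xs \<in> K \<and>
     (\<exists>g\<in>H xs. \<forall>x\<in>K. ip (PI m n qd) (\<lambda>p. F xs p + g p) (\<lambda>p. x p - xs p) \<ge> 0)"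

text \<open>A v-GNE of the multi-cluster game is, by definition, a solution of GVI(Theta,K).\<close>
definition vGNE :: "nat \<Rightarrow> (nat \<Rightarrow> nat) \<Rightarrow> (nat \<Rightarrow> nat) \<Rightarrow> nat \<Rightarrow> (nat \<Rightarrow> nat \<Rightarrow> prof \<Rightarrow> real)
    \<Rightarrow> (nat \<Rightarrow> nat \<Rightarrow> (nat \<Rightarrow> real) \<Rightarrow> real) \<Rightarrow> (nat \<Rightarrow> nat \<Rightarrow> (nat \<Rightarrow> real) set)
    \<Rightarrow> (nat \<Rightarrow> nat \<Rightarrow> nat \<Rightarrow> real) \<Rightarrow> (nat \<Rightarrow> nat \<Rightarrow> real) \<Rightarrow> prof \<Rightarrow> bool" where
  "vGNE m n qd w f h \<Omega> A b xs \<longleftrightarrow>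
     GVI_sol m n qd (Fop n f) (Hset m n qd h \<Omega>) (Kset m n qd w A b \<Omega>) xs"

definition vec_of_dim :: "nat \<Rightarrow> (nat \<Rightarrow> real) set" where
  "vec_of_dim d = {v. \<forall>k\<ge>d. v k = 0}"

definition convex_set :: "(nat \<Rightarrow> real) set \<Rightarrow> bool" where
  "convex_set S \<longleftrightarrow> (\<forall>x\<in>S. \<forall>y\<in>S. \<forall>t::real. 0 \<le> t \<and> t \<le> 1 \<longrightarrow> (\<lambda>k. t * x k + (1 - t) * y k) \<in> S)"

definition convex_fun_on :: "(nat \<Rightarrow> real) set \<Rightarrow> ((nat \<Rightarrow> real) \<Rightarrow> real) \<Rightarrow> bool" where
  "convex_fun_on S g \<longleftrightarrow> (\<forall>x\<in>S. \<forall>y\<in>S. \<forall>t::real. 0 \<le> t \<and> t \<le> 1 \<longrightarrow>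
      g (\<lambda>k. t * x k + (1 - t) * y k) \<le> t * g x + (1 - t) * g y)"

definition ext_fun :: "('a \<Rightarrow> real) set \<Rightarrow> (('a \<Rightarrow> real) \<Rightarrow> real) \<Rightarrow> ('a \<Rightarrow> real) \<Rightarrow> ereal" where
  "ext_fun S g v = (if v \<in> S then ereal (g v) else \<infinity>)"

definition lsc_ext :: "(nat \<Rightarrow> real) set \<Rightarrow> ((nat \<Rightarrow> real) \<Rightarrow> real) \<Rightarrow> bool" where
  "lsc_ext S g \<longleftrightarrow> (\<forall>x s. s \<longlonglongrightarrow> x \<longrightarrow> ext_fun S g x \<le> liminf (\<lambda>k. ext_fun S g (s k)))"

definition aff_hull :: "(nat \<Rightarrow> real) set \<Rightarrow> (nat \<Rightarrow> real) set" where
  "aff_hull S = {v. \<exists>T u. finite T \<and> T \<subseteq> S \<and> sum u T = 1 \<and> v = (\<lambda>k. \<Sum>t\<in>T. u t * t k)}"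

definition rel_int :: "nat \<Rightarrow> (nat \<Rightarrow> real) set \<Rightarrow> (nat \<Rightarrow> real) set" where
  "rel_int d S = {x\<in>S. \<exists>e>0. \<forall>y\<in>aff_hull S. vnorm {..<d} (\<lambda>k. y k - x k) < e \<longrightarrow> y \<in> S}"

definition eigvals :: "'a set \<Rightarrow> ('a \<Rightarrow> 'a \<Rightarrow> real) \<Rightarrow> real set" where
  "eigvals I M = {e. \<exists>v. (\<exists>a\<in>I. v a \<noteq> 0) \<and> (\<forall>a\<in>I. (\<Sum>b\<in>I. M a b * v b) = e * v a)}"

definition smax :: "'a set \<Rightarrow> ('a \<Rightarrow> 'a \<Rightarrow> real) \<Rightarrow> real" where
  "smax I M = Max (eigvals I M)"

definition sigmax :: "nat \<Rightarrow> nat \<Rightarrow> (nat \<Rightarrow> nat \<Rightarrow> real) \<Rightarrow> real" where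
  "sigmax w d Aj = sqrt (smax {..<d} (\<lambda>k k'. \<Sum>r<w. Aj r k * Aj r k'))"

text \<open>spectral norm of Psi^{-1} = diag(rho, sigma, tau, nu)\<close>
definition psi_inv_norm :: "nat \<Rightarrow> (nat \<Rightarrow> nat) \<Rightarrow> (nat \<Rightarrow> nat) \<Rightarrow> nat
    \<Rightarrow> (nat \<Rightarrow> nat \<Rightarrow> real) \<Rightarrow> (nat \<Rightarrow> real) \<Rightarrow> (nat \<Rightarrow> nat \<Rightarrow> real) \<Rightarrow> (nat \<Rightarrow> real) \<Rightarrow> real" where
  "psi_inv_norm m n qd w \<rho> \<sigma> \<tau> \<nu> = Sup {sqrt (
        (\<Sum>(a,p)\<in>EI m n qd. (\<rho> (fst a) (snd a) * xh a p)\<^sup>2)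
      + (\<Sum>(j,r)\<in>CW m w. (\<sigma> j * z (j,r))\<^sup>2)
      + (\<Sum>(j,i,k)\<in>PI m n qd. (\<tau> j i * lam (j,i,k))\<^sup>2)
      + (\<Sum>(j,r)\<in>CW m w. (\<nu> j * mu (j,r))\<^sup>2)) | xh z lam mu.
      (\<Sum>(a,p)\<in>EI m n qd. (xh a p)\<^sup>2) + (\<Sum>c\<in>CW m w. (z c)\<^sup>2)
      + (\<Sum>p\<in>PI m n qd. (lam p)\<^sup>2) + (\<Sum>c\<in>CW m w. (mu c)\<^sup>2) = 1}"

definition ellA :: "nat \<Rightarrow> (nat \<Rightarrow> nat) \<Rightarrow> (nat \<Rightarrow> nat) \<Rightarrow> nat \<Rightarrow> (nat \<Rightarrow> nat \<Rightarrow> nat \<Rightarrow> real)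
    \<Rightarrow> (nat \<Rightarrow> nat \<Rightarrow> real) \<Rightarrow> (nat \<Rightarrow> nat \<Rightarrow> nat \<Rightarrow> real) \<Rightarrow> real \<Rightarrow> real \<Rightarrow> real" where
  "ellA m n qd w W WL A \<kappa> c = \<kappa> + c * (smax (Ag m n) (Lbig n W) + smax {..<m} (lap m WL))
     + 2 * smax (Ag m n) (Lbig n W) + 2 * smax {..<m} (lap m WL)
     + 2 * Max ((\<lambda>j. sigmax w (qd j) (A j)) ` {..<m})"

end

theory Submission
  imports Defs
begin

lemma lap_sym: assumes "ugraph N W" "i<N" "l<N" shows "lap N W i l = lap N W l i"
  using assms by (auto simp: lap_def ugraph_def)

lemma lap_row: assumes "i<N" shows "(\<Sum>l<N. lap N W i l * u l) = (\<Sum>l<N. W i l * (u i - u l))"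
proof -
  have "(\<Sum>l<N. lap N W i l * u l) = lap N W i i * u i + (\<Sum>l\<in>{..<N}-{i}. lap N W i l * u l)"
    using assms by (simp add: sum.remove)
  also have "\<dots> = (\<Sum>l\<in>{..<N}-{i}. W i l * u i) + (\<Sum>l\<in>{..<N}-{i}. - W i l * u l)"
    by (simp add: lap_def sum_distrib_right)
  also have "\<dots> = (\<Sum>l\<in>{..<N}-{i}. W i l * (u i - u l))"
    by (simp add: sum.distrib[symmetric] algebra_simps)
  also have "\<dots> = (\<Sum>l<N. W i l * (u i - u l))" using assms by (simp add: sum.remove)
  finally show ?thesis .
qed

lemma lap_rowsum: assumes "i<N" shows "(\<Sum>l<N. lap N W i l * c) = 0"
  using lap_row[OF assms, of W "\<lambda>_. c"] by simp

lemma lap_colsum: assumes "ugraph N W" shows "(\<Sum>i<N. \<Sum>l<N. lap N W i l * u l) = 0"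
proof -
  have "(\<Sum>i<N. \<Sum>l<N. lap N W i l * u l) = (\<Sum>l<N. \<Sum>i<N. lap N W l i * u l)"
    by (subst sum.swap) (auto intro!: sum.cong simp: lap_sym[OF assms])
  also have "\<dots> = 0" by (simp add: lap_rowsum)
  finally show ?thesis .
qed

lemma lap_quad: assumes "ugraph N W"
  shows "(\<Sum>i<N. u i * (\<Sum>l<N. lap N W i l * u l)) = (\<Sum>i<N. \<Sum>l<N. W i l * (u i - u l)^2) / 2"
proof -
  let ?S = "\<Sum>i<N. \<Sum>l<N. W i l * u i * (u i - u l)"
  have 1: "(\<Sum>i<N. u i * (\<Sum>l<N. lap N W i l * u l)) = ?S"
    by (auto simp add: lap_row sum_distrib_left mult.assoc mult.left_commute intro!: sum.cong)
  have 2: "?S = (\<Sum>i<N. \<Sum>l<N. W i l * u l * (u l - u i))"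
    apply (subst sum.swap) using assms by (auto simp: ugraph_def intro!: sum.cong)
  have 3: "?S + ?S = (\<Sum>i<N. \<Sum>l<N. W i l * (u i - u l)^2)"
    apply (subst (2) 2) by (simp add: sum.distrib[symmetric] power2_eq_square algebra_simps)
  show ?thesis using 1 3 by simp
qed

lemma lap_quad_nonneg: assumes "ugraph N W"
  shows "(\<Sum>i<N. u i * (\<Sum>l<N. lap N W i l * u l)) \<ge> 0"
  unfolding lap_quad[OF assms] using assms unfolding ugraph_def
  by (auto intro!: sum_nonneg)

lemma lap_const: assumes g: "ugraph N W" and c: "graph_connected N W"
  and q: "(\<Sum>i<N. u i * (\<Sum>l<N. lap N W i l * u l)) = 0"
  shows "\<forall>i<N. \<forall>l<N. u i = u l"
proof -
  have "(\<Sum>i<N. \<Sum>l<N. W i l * (u i - u l)^2) = 0" using q lap_quad[OF g] by simp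
  moreover have nn: "\<forall>i<N. \<forall>l<N. W i l * (u i - u l)^2 \<ge> 0" using g unfolding ugraph_def by auto
  ultimately have z0: "\<forall>i<N. (\<Sum>l<N. W i l * (u i - u l)^2) = 0"
    by (subst (asm) sum_nonneg_eq_0_iff) (auto intro!: sum_nonneg)
  have z: "\<forall>i<N. \<forall>l<N. W i l * (u i - u l)^2 = 0"
  proof (intro allI impI)
    fix i l assume "i<N" "l<N"
    then have "(\<Sum>l<N. W i l * (u i - u l)^2) = 0" using z0 by auto
    then show "W i l * (u i - u l)^2 = 0" using nn \<open>i<N\<close> \<open>l<N\<close>
      by (subst (asm) sum_nonneg_eq_0_iff) auto
  qed
  have e: "u a = u b" if "a<N" "b<N" "W a b > 0" for a b
    using z that by fastforce
  have "u i = u l" if "(i,l) \<in> {(a,b). a < N \<and> b < N \<and> W a b > 0}\<^sup>*" for i l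
    using that
  proof (induction rule: rtrancl_induct)
    case base then show ?case by simp
  next
    case (step y z) then show ?case using e by auto
  qed
  then show ?thesis using c unfolding graph_connected_def by blast
qed

lemma lap_ker: assumes "ugraph N W" "graph_connected N W" "\<forall>i<N. (\<Sum>l<N. lap N W i l * u l) = 0"
  shows "\<forall>i<N. \<forall>l<N. u i = u l"
  using assms by (intro lap_const) auto

lemma PI_Sigma: "PI m n qd = (SIGMA j:{..<m}. SIGMA i:{..<n j}. {..<qd j})"
  by (auto simp: PI_def)
lemma sum_PI: "(\<Sum>p\<in>PI m n qd. F p) = (\<Sum>j<m. \<Sum>i<n j. \<Sum>k<qd j. F (j,i,k))"
proof -
  have "(\<Sum>p\<in>PI m n qd. F p) = (\<Sum>j<m. \<Sum>ik\<in>{..<n j} \<times> {..<qd j}. F (j,ik))"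
    unfolding PI_Sigma by (subst sum.Sigma) auto
  also have "\<dots> = (\<Sum>j<m. \<Sum>i<n j. \<Sum>k<qd j. F (j,i,k))"
    by (simp add: sum.cartesian_product)
  finally show ?thesis .
qed
lemma sum_CW: "(\<Sum>p\<in>CW m w. F p) = (\<Sum>j<m. \<Sum>r<w. F (j,r))"
  by (simp add: CW_def lessThan_def[symmetric] sum.cartesian_product)

lemma sum_if0: "0 < (N::nat) \<Longrightarrow> (\<Sum>i<N. (if i = 0 then X i else (0::real))) = X 0"
  using sum.delta[of "{..<N}" 0 X] by simp

lemma combined_const:
  assumes g: "\<forall>j<m. ugraph (n j) (W j)" "ugraph m WL"
    and con: "\<forall>j<m. graph_connected (n j) (W j)" "graph_connected m WL"
    and nj: "\<forall>j<m. n j \<ge> 1"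
    and j0: "j0 < m" "i0 < n j0"
    and T: "\<forall>j<m. \<forall>i<n j. (j,i) \<noteq> (j0,i0) \<longrightarrow>
       (\<Sum>l<n j. lap (n j) (W j) i l * u j l) + (if i = 0 then (\<Sum>l<m. lap m WL j l * u l 0) else 0) = 0"
  shows "\<forall>j<m. \<forall>i<n j. u j i = u 0 0"
proof -
  define L0 where "L0 j = (\<Sum>l<m. lap m WL j l * u l 0)" for j
  define T where "T j i = (\<Sum>l<n j. lap (n j) (W j) i l * u j l) + (if i = 0 then L0 j else 0)" for j i
  have Tz: "\<forall>j<m. \<forall>i<n j. (j,i) \<noteq> (j0,i0) \<longrightarrow> T j i = 0" using T unfolding T_def L0_def by blast
  have sumT: "(\<Sum>j<m. \<Sum>i<n j. T j i) = 0"
  proof -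
    have "(\<Sum>j<m. \<Sum>i<n j. T j i) = (\<Sum>j<m. \<Sum>i<n j. \<Sum>l<n j. lap (n j) (W j) i l * u j l) + (\<Sum>j<m. L0 j)"
      unfolding T_def using nj by (auto simp add: sum.distrib sum_if0 intro!: sum.cong)
    also have "\<dots> = 0" using g by (simp add: lap_colsum L0_def)
    finally show ?thesis .
  qed
  have "(\<Sum>j<m. \<Sum>i<n j. T j i) = (\<Sum>j<m. if j = j0 then T j0 i0 else 0)"
  proof (rule sum.cong[OF refl])
    fix j assume j: "j \<in> {..<m}"
    show "(\<Sum>i<n j. T j i) = (if j = j0 then T j0 i0 else 0)"
    proof (cases "j = j0")
      case True
      have "(\<Sum>i<n j. T j i) = (\<Sum>i<n j. if i = i0 then T j0 i0 else 0)"
        using Tz j True by (intro sum.cong) auto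
      then show ?thesis using True j0 by (simp add: sum.delta)
    next
      case False then show ?thesis using Tz j by simp
    qed
  qed
  then have "T j0 i0 = 0" using sumT j0 by (simp add: sum.delta)
  then have Tall: "\<forall>j<m. \<forall>i<n j. T j i = 0" using Tz by (metis prod.inject)
  define Q where "Q j = (\<Sum>i<n j. u j i * (\<Sum>l<n j. lap (n j) (W j) i l * u j l))" for j
  define Q0 where "Q0 = (\<Sum>j<m. u j 0 * L0 j)"
  have "0 = (\<Sum>j<m. \<Sum>i<n j. u j i * T j i)" using Tall by simp
  also have "\<dots> = (\<Sum>j<m. Q j + u j 0 * L0 j)"
  proof (rule sum.cong[OF refl])
    fix j assume "j \<in> {..<m}"
    then have "0 < n j" using nj by auto
    then show "(\<Sum>i<n j. u j i * T j i) = Q j + u j 0 * L0 j"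
    proof -
      have "(\<Sum>i<n j. u j i * T j i) = (\<Sum>i<n j. u j i * (\<Sum>l<n j. lap (n j) (W j) i l * u j l))
          + (\<Sum>i<n j. if i = 0 then u j i * L0 j else 0)"
      proof -
        have "\<And>i. u j i * T j i = u j i * (\<Sum>l<n j. lap (n j) (W j) i l * u j l) + (if i = 0 then u j i * L0 j else 0)"
          by (simp add: T_def distrib_left)
        then show ?thesis by (simp only: sum.distrib[symmetric])
      qed
      then show ?thesis using sum_if0[OF \<open>0 < n j\<close>, of "\<lambda>i. u j i * L0 j"] unfolding Q_def by linarith
    qed
  qed
  also have "\<dots> = (\<Sum>j<m. Q j) + Q0" by (simp add: sum.distrib Q0_def)
  finally have s0: "(\<Sum>j<m. Q j) + Q0 = 0" by simp
  have Qnn: "\<forall>j<m. Q j \<ge> 0" using g unfolding Q_def by (auto intro: lap_quad_nonneg)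
  have Q0nn: "Q0 \<ge> 0" unfolding Q0_def L0_def using lap_quad_nonneg[OF g(2), of "\<lambda>l. u l 0"] by simp
  have "(\<Sum>j<m. Q j) \<ge> 0" using Qnn by (auto intro: sum_nonneg)
  then have Q0z: "Q0 = 0" and Qs: "(\<Sum>j<m. Q j) = 0" using s0 Q0nn by linarith+
  have Qz: "\<forall>j<m. Q j = 0" using Qs Qnn by (subst (asm) sum_nonneg_eq_0_iff) auto
  have lead: "\<forall>j<m. \<forall>l<m. u j 0 = u l 0"
  proof -
    have "(\<Sum>i<m. u i 0 * (\<Sum>l<m. lap m WL i l * u l 0)) = 0" using Q0z unfolding Q0_def L0_def .
    from lap_const[OF g(2) con(2) this] show ?thesis .
  qed
  have clus: "\<forall>j<m. \<forall>i<n j. \<forall>l<n j. u j i = u j l"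
  proof (intro allI impI)
    fix j i l assume "j<m" "i<n j" "l<n j"
    have "Q j = 0" using Qz \<open>j<m\<close> by blast
    then have q: "(\<Sum>i<n j. u j i * (\<Sum>l<n j. lap (n j) (W j) i l * u j l)) = 0" unfolding Q_def .
    have gj: "ugraph (n j) (W j)" using g(1) \<open>j<m\<close> by blast
    have cj: "graph_connected (n j) (W j)" using con(1) \<open>j<m\<close> by blast
    have "\<forall>i<n j. \<forall>l<n j. u j i = u j l" by (rule lap_const[OF gj cj q])
    then show "u j i = u j l" using \<open>i<n j\<close> \<open>l<n j\<close> by blast
  qed
  show ?thesis
  proof (intro allI impI)
    fix j i assume "j<m" "i<n j"
    have "0 < n j" using nj \<open>j<m\<close> by fastforce
    then have "u j i = u j 0" using clus \<open>j<m\<close> \<open>i<n j\<close> by blast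
    also have "\<dots> = u 0 0" using lead \<open>j<m\<close> by (metis gr_zeroI not_less_zero)
    finally show "u j i = u 0 0" .
  qed
qed

lemma Hset_cong: assumes "\<forall>p\<in>PI m n qd. x p = y p"
  shows "Hset m n qd h \<Omega> x = Hset m n qd h \<Omega> y"
proof -
  have b: "\<And>j i. j<m \<Longrightarrow> i<n j \<Longrightarrow> blk qd x j i = blk qd y j i" using assms by (auto simp: blk_def PI_def)
  have s: "\<And>j i k. j<m \<Longrightarrow> i<n j \<Longrightarrow> k < qd j \<Longrightarrow> x (j,i,k) = y (j,i,k)" using assms by (auto simp: PI_def)
  have S1: "\<And>j. j<m \<Longrightarrow> (\<Sum>i<n j. h j i (blk qd x j i)) = (\<Sum>i<n j. h j i (blk qd y j i))"
    using b by (auto intro!: sum.cong)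
  have S2: "\<And>j g z. j<m \<Longrightarrow> (\<Sum>i<n j. \<Sum>k<qd j. g (j,i,k) * (z (j,i,k) - x (j,i,k)))
      = (\<Sum>i<n j. \<Sum>k<qd j. g (j,i,k) * (z (j,i,k) - y (j,i,k)))"
    using s by (auto intro!: sum.cong)
  show ?thesis unfolding Hset_def
    by (rule Collect_cong) (simp add: b S1 S2 cong: conj_cong)
qed

theorem theorem2:
  fixes m w :: nat and n qd :: "nat \<Rightarrow> nat"
    and W :: "nat \<Rightarrow> nat \<Rightarrow> nat \<Rightarrow> real" and WL :: "nat \<Rightarrow> nat \<Rightarrow> real"
    and A :: "nat \<Rightarrow> nat \<Rightarrow> nat \<Rightarrow> real" and b :: "nat \<Rightarrow> nat \<Rightarrow> real"
    and f :: "nat \<Rightarrow> nat \<Rightarrow> prof \<Rightarrow> real"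
    and h :: "nat \<Rightarrow> nat \<Rightarrow> (nat \<Rightarrow> real) \<Rightarrow> real"
    and \<Omega> :: "nat \<Rightarrow> nat \<Rightarrow> (nat \<Rightarrow> real) set"
    and c \<eta> \<kappa>0 \<kappa> :: real
    and \<rho> \<tau> :: "nat \<Rightarrow> nat \<Rightarrow> real" and \<sigma> \<nu> :: "nat \<Rightarrow> real"
    and xh :: est and z :: cwvec and lam :: prof and mu :: cwvec
  assumes dims: "m \<ge> 1" "w \<ge> 1" "\<forall>j<m. n j \<ge> 1 \<and> qd j \<ge> 1"
    and graphs: "\<forall>j<m. ugraph (n j) (W j)" "ugraph m WL"
    \<comment> \<open>(A1)\<close>
    and f_dep: "\<forall>j<m. \<forall>i<n j. \<forall>x y. (\<forall>p\<in>PI m n qd. x p = y p) \<longrightarrow> f j i x = f j i y"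
    and f_convex: "\<forall>j<m. \<forall>i<n j. \<forall>x y t. (\<forall>p. fst p \<noteq> j \<longrightarrow> x p = y p) \<longrightarrow> 0 \<le> t \<longrightarrow> t \<le> 1 \<longrightarrow>
        f j i (\<lambda>p. t * x p + (1 - t) * y p) \<le> t * f j i x + (1 - t) * f j i y"
    and f_diff: "\<forall>j<m. \<forall>i<n j. \<forall>x. \<forall>p\<in>PI m n qd. fst p = j \<longrightarrow>
        (\<lambda>t. f j i (x(p := x p + t))) differentiable (at 0)"
    and f_C1: "\<forall>j<m. \<forall>i<n j. \<forall>x. \<forall>p\<in>PI m n qd. fst p = j \<longrightarrow>
        (\<forall>\<epsilon>>0. \<exists>\<delta>>0. \<forall>y. (\<forall>p'. fst p' \<noteq> j \<longrightarrow> y p' = x p') \<longrightarrow>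
            (\<forall>p'\<in>PI m n qd. fst p' = j \<longrightarrow> \<bar>y p' - x p'\<bar> < \<delta>) \<longrightarrow>
            \<bar>pd (f j i) y p - pd (f j i) x p\<bar> < \<epsilon>)"
    and h_props: "\<forall>j<m. \<forall>i<n j. \<Omega> j i \<noteq> {} \<and> \<Omega> j i \<subseteq> vec_of_dim (qd j) \<and> compact (\<Omega> j i)
        \<and> convex_set (\<Omega> j i) \<and> convex_fun_on (\<Omega> j i) (h j i) \<and> lsc_ext (\<Omega> j i) (h j i)"
    \<comment> \<open>(A2)\<close>
    and K_nonempty: "Kset m n qd w A b \<Omega> \<noteq> {}"
    and slater: "\<exists>x\<in>Kset m n qd w A b \<Omega>. (\<forall>j<m. \<forall>i<n j. blk qd x j i \<in> rel_int (qd j) (\<Omega> j i))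
        \<and> (\<forall>r<w. Aop m qd A x r < bsum m b r)"
    \<comment> \<open>(A3)\<close>
    and connected: "\<forall>j<m. graph_connected (n j) (W j)" "graph_connected m WL"
    \<comment> \<open>(A4)\<close>
    and F_strmon: "\<eta> > 0" "\<forall>x y. ip (PI m n qd) (\<lambda>p. Fop n f x p - Fop n f y p) (\<lambda>p. x p - y p)
        \<ge> \<eta> * (vnorm (PI m n qd) (\<lambda>p. x p - y p))\<^sup>2"
    and F_lip: "\<forall>x y. vnorm (PI m n qd) (\<lambda>p. Fop n f x p - Fop n f y p) \<le> \<kappa>0 * vnorm (PI m n qd) (\<lambda>p. x p - y p)"
    \<comment> \<open>(A5)\<close>
    and GVI_exists: "\<exists>xs. GVI_sol m n qd (Fop n f) (Hset m n qd h \<Omega>) (Kset m n qd w A b \<Omega>) xs"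
    \<comment> \<open>(A6)\<close>
    and Fbold_lip: "\<forall>xh1 xh2. vnorm (PI m n qd) (\<lambda>p. Fbold n f xh1 p - Fbold n f xh2 p)
        \<le> \<kappa> * vnorm (EI m n qd) (\<lambda>(a,p). xh1 a p - xh2 a p)"
    \<comment> \<open>parameters and (A7)\<close>
    and c_pos: "c > 0"
    and steps_pos: "\<forall>j<m. \<forall>i<n j. \<rho> j i > 0 \<and> \<tau> j i > 0" "\<forall>j<m. \<sigma> j > 0 \<and> \<nu> j > 0"
    and step_bound: "psi_inv_norm m n qd w \<rho> \<sigma> \<tau> \<nu> < 1 / ellA m n qd w W WL A \<kappa> c"
    \<comment> \<open>varpi* = col(xh, z, lam, mu) is a zero of A + B\<close>
    and zer1: "\<exists>g\<in>Hset m n qd h \<Omega> (Rop xh). \<forall>(a,p)\<in>EI m n qd.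
        RT (Fbold n f xh) a p + c * (Lhat n W xh a p + L0hat m WL xh a p)
        + RT (LopT n W lam) a p + RT (LamT w A mu) a p + RT g a p = 0"
    and zer2: "\<forall>cr\<in>CW m w. L0op m WL mu cr = 0"
    and zer3: "\<forall>p\<in>PI m n qd. - Lop n W (Rop xh) p = 0"
    and zer4: "\<exists>v\<in>normal_cone (CW m w) (orthant (CW m w)) mu. \<forall>cr\<in>CW m w.
        - Lamop qd A (Rop xh) cr - L0op m WL z cr + b (fst cr) (snd cr) + v cr = 0"
  shows "\<exists>xs ms.
      (\<forall>(a,p)\<in>EI m n qd. xh a p = xs p) \<and>
      (\<forall>(j,r)\<in>CW m w. mu (j,r) = ms r) \<and>
      (\<exists>g\<in>Hset m n qd h \<Omega> (Rop xh). \<forall>(a,p)\<in>EI m n qd.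
          RT (Fbold n f xh) a p + RT g a p + RT (Lop n W lam) a p + RT (LamT w A mu) a p = 0) \<and>
      (\<exists>v\<in>normal_cone {..<w} (orthant {..<w}) ms. \<forall>r<w.
          bsum m b r - Aop m qd A (Rop xh) r + v r = 0) \<and>
      (\<forall>p\<in>PI m n qd. Lop n W (Rop xh) p = 0) \<and>
      (\<exists>g\<in>Hset m n qd h \<Omega> xs. \<forall>p\<in>PI m n qd.
          Fop n f xs p + g p + Lop n W lam p + AT w A ms p = 0) \<and>
      (\<exists>v\<in>normal_cone {..<w} (orthant {..<w}) ms. \<forall>r<w.
          bsum m b r - Aop m qd A xs r + v r = 0) \<and>
      (\<forall>p\<in>PI m n qd. Lop n W xs p = 0) \<and>
      GVI_sol m n qd (Fop n f) (Hset m n qd h \<Omega>) (Kset m n qd w A b \<Omega>) xs \<and>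
      vGNE m n qd w f h \<Omega> A b xs"
proof -
  have nj: "\<forall>j<m. n j \<ge> 1" using dims(3) by auto
  from zer1 obtain g where gH: "g \<in> Hset m n qd h \<Omega> (Rop xh)" and geq: "\<forall>(a,p)\<in>EI m n qd.
        RT (Fbold n f xh) a p + c * (Lhat n W xh a p + L0hat m WL xh a p)
        + RT (LopT n W lam) a p + RT (LamT w A mu) a p + RT g a p = 0" by blast
  define xs where "xs p = xh (0,0) p" for p
  define ms where "ms r = mu (0,r)" for r
  have cons: "xh (j,i) p = xs p" if j: "j<m" "i<n j" and p: "p \<in> PI m n qd" for j i p
  proof -
    obtain j' i' k where pe: "p = (j',i',k)" by (cases p) auto
    have p': "j' < m" "i' < n j'" "k < qd j'" using p pe by (auto simp: PI_def)
    have T: "\<forall>jj<m. \<forall>ii<n jj. (jj,ii) \<noteq> (j',i') \<longrightarrow> (\<Sum>l<n jj. lap (n jj) (W jj) ii l * xh (jj,l) p)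
       + (if ii = 0 then (\<Sum>l<m. lap m WL jj l * xh (l,0) p) else 0) = 0"
    proof (intro allI impI)
      fix jj ii assume a: "jj < m" "ii < n jj" "(jj,ii) \<noteq> (j',i')"
      have "((jj,ii),p) \<in> EI m n qd" using a p by (simp add: EI_def Ag_def)
      then have e: "RT (Fbold n f xh) (jj,ii) p + c * (Lhat n W xh (jj,ii) p + L0hat m WL xh (jj,ii) p)
        + RT (LopT n W lam) (jj,ii) p + RT (LamT w A mu) (jj,ii) p + RT g (jj,ii) p = 0" using geq by blast
      have "\<And>v. RT v (jj,ii) p = 0" using a(3) by (auto simp add: RT_def pe)
      then have "c * (Lhat n W xh (jj,ii) p + L0hat m WL xh (jj,ii) p) = 0" using e by simp
      then have "Lhat n W xh (jj,ii) p + L0hat m WL xh (jj,ii) p = 0" using c_pos by simp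
      then show "(\<Sum>l<n jj. lap (n jj) (W jj) ii l * xh (jj,l) p)
       + (if ii = 0 then (\<Sum>l<m. lap m WL jj l * xh (l,0) p) else 0) = 0" by (simp add: Lhat_def L0hat_def)
    qed
    have "\<forall>jj<m. \<forall>ii<n jj. xh (jj,ii) p = xh (0,0) p"
      by (rule combined_const[OF graphs(1) graphs(2) connected(1) connected(2) nj p'(1) p'(2), where u = "\<lambda>jj ii. xh (jj,ii) p", OF T])
    then show "xh (j,i) p = xs p" using j by (simp add: xs_def)
  qed
  have PI_iff: "(j,i,k) \<in> PI m n qd \<longleftrightarrow> j < m \<and> i < n j \<and> k < qd j" for j i k by (simp add: PI_def)
  have lapsymj: "lap (n j) (W j) i l = lap (n j) (W j) l i" if "j<m" "i<n j" "l<n j" for j i l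
    using lap_sym[of "n j" "W j" i l] graphs(1) that by blast
  have LopT_eq: "LopT n W v (j,i,k) = Lop n W v (j,i,k)" if "j<m" "i<n j" for v j i k
    unfolding LopT_def Lop_def using lapsymj[OF that] by (auto intro!: sum.cong)
  have C1: "\<forall>(a,p)\<in>EI m n qd. xh a p = xs p" using cons by (auto simp: EI_def Ag_def)
  have Lz: "Lhat n W xh (j,i) p + L0hat m WL xh (j,i) p = 0" if "j<m" "i<n j" "p \<in> PI m n qd" for j i p
  proof -
    have "Lhat n W xh (j,i) p = (\<Sum>l<n j. lap (n j) (W j) i l * xs p)"
      unfolding Lhat_def using cons that by (auto intro!: sum.cong)
    also have "\<dots> = 0" using lap_rowsum that(2) by blast
    finally have 1: "Lhat n W xh (j,i) p = 0" .
    have "(\<Sum>l<m. lap m WL j l * xh (l,0) p) = (\<Sum>l<m. lap m WL j l * xs p)"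
    proof (rule sum.cong[OF refl])
      fix l assume "l \<in> {..<m}"
      then have "l<m" "0 < n l" using nj by (auto simp: Suc_le_eq)
      then show "lap m WL j l * xh (l,0) p = lap m WL j l * xs p" using cons[of l 0 p] that(3) by simp
    qed
    also have "\<dots> = 0" using lap_rowsum that(1) by blast
    finally have 2: "L0hat m WL xh (j,i) p = 0" unfolding L0hat_def by simp
    show ?thesis using 1 2 by simp
  qed
  have C3: "\<forall>(a,p)\<in>EI m n qd.
          RT (Fbold n f xh) a p + RT g a p + RT (Lop n W lam) a p + RT (LamT w A mu) a p = 0"
  proof (intro ballI, clarify)
    fix j i p assume ap: "((j,i),p) \<in> EI m n qd"
    then have a: "j<m" "i<n j" "p \<in> PI m n qd" by (auto simp: EI_def Ag_def)
    have "RT (LopT n W lam) (j,i) p = RT (Lop n W lam) (j,i) p"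
      using LopT_eq[OF a(1,2)] by (cases p) (auto simp: RT_def)
    then show "RT (Fbold n f xh) (j,i) p + RT g (j,i) p + RT (Lop n W lam) (j,i) p + RT (LamT w A mu) (j,i) p = 0"
      using geq ap Lz[OF a] by fastforce
  qed
  have mucl: "\<forall>r<w. \<forall>j<m. \<forall>l<m. mu (j,r) = mu (l,r)"
  proof (intro allI impI)
    fix r j l assume r: "r<w" and jl: "j<m" "l<m"
    have "\<forall>i<m. (\<Sum>l<m. lap m WL i l * mu (l,r)) = 0"
    proof (intro allI impI)
      fix i assume "i<m"
      then have "(i,r) \<in> CW m w" using r by (simp add: CW_def)
      then have "L0op m WL mu (i,r) = 0" using zer2 by blast
      then show "(\<Sum>l<m. lap m WL i l * mu (l,r)) = 0" by (simp add: L0op_def)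
    qed
    then have "\<forall>i<m. \<forall>l<m. mu (i,r) = mu (l,r)" by (rule lap_ker[OF graphs(2) connected(2)])
    then show "mu (j,r) = mu (l,r)" using jl by blast
  qed
  have C2: "\<forall>(j,r)\<in>CW m w. mu (j,r) = ms r"
  proof (clarify)
    fix j r assume "(j,r) \<in> CW m w"
    then have "j<m" "r<w" "0<m" by (auto simp: CW_def)
    then show "mu (j,r) = ms r" unfolding ms_def using mucl by blast
  qed
  from zer4 obtain v' where v'N: "v' \<in> normal_cone (CW m w) (orthant (CW m w)) mu"
    and v'eq: "\<forall>cr\<in>CW m w. - Lamop qd A (Rop xh) cr - L0op m WL z cr + b (fst cr) (snd cr) + v' cr = 0" by blast
  define vv where "vv r = (\<Sum>j<m. v' (j,r))" for r
  have muO: "mu \<in> orthant (CW m w)" using v'N by (simp add: normal_cone_def)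
  have msnn: "ms r \<ge> 0" if "r<w" for r
  proof -
    have "(0,r) \<in> CW m w" using that dims(1) by (simp add: CW_def)
    then show ?thesis using muO unfolding orthant_def ms_def by blast
  qed
  have vvN: "vv \<in> normal_cone {..<w} (orthant {..<w}) ms"
    unfolding normal_cone_def
  proof (intro CollectI conjI ballI)
    show "ms \<in> orthant {..<w}" using msnn by (simp add: orthant_def)
    fix y assume y: "y \<in> orthant {..<w}"
    define Y where "Y = (\<lambda>(j::nat,r). y r)"
    have "Y \<in> orthant (CW m w)" using y by (auto simp: orthant_def Y_def CW_def)
    then have "(\<Sum>c\<in>CW m w. v' c * (Y c - mu c)) \<le> 0" using v'N by (simp add: normal_cone_def)
    also have "(\<Sum>c\<in>CW m w. v' c * (Y c - mu c)) = (\<Sum>j<m. \<Sum>r<w. v' (j,r) * (y r - ms r))"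
    proof -
      have "\<And>j r. j<m \<Longrightarrow> r<w \<Longrightarrow> mu (j,r) = ms r" using C2 by (auto simp: CW_def)
      then show ?thesis unfolding sum_CW Y_def by (intro sum.cong) auto
    qed
    also have "\<dots> = (\<Sum>r<w. vv r * (y r - ms r))"
      unfolding vv_def sum_distrib_right by (rule sum.swap)
    finally show "(\<Sum>r<w. vv r * (y r - ms r)) \<le> 0" .
  qed
  have L0z: "(\<Sum>j<m. L0op m WL z (j,r)) = 0" for r
    unfolding L0op_def using lap_colsum[OF graphs(2)] by simp
  have Aop_eq: "Aop m qd A (Rop xh) r = (\<Sum>j<m. Lamop qd A (Rop xh) (j,r))" for r
    by (simp add: Aop_def Lamop_def)
  have C4eq: "\<forall>r<w. bsum m b r - Aop m qd A (Rop xh) r + vv r = 0"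
  proof (intro allI impI)
    fix r assume r: "r<w"
    have "(\<Sum>j<m. - Lamop qd A (Rop xh) (j,r) - L0op m WL z (j,r) + b j r + v' (j,r)) = 0"
      using v'eq r by (auto simp: CW_def intro!: sum.neutral)
    then show "bsum m b r - Aop m qd A (Rop xh) r + vv r = 0"
      using L0z[of r] by (simp add: sum.distrib sum_subtractf Aop_eq bsum_def vv_def sum_negf)
  qed
  have C4: "\<exists>v\<in>normal_cone {..<w} (orthant {..<w}) ms. \<forall>r<w.
          bsum m b r - Aop m qd A (Rop xh) r + v r = 0" using vvN C4eq by blast
  have C5: "\<forall>p\<in>PI m n qd. Lop n W (Rop xh) p = 0" using zer3 by simp
  have Rxs: "\<forall>p\<in>PI m n qd. Rop xh p = xs p"
  proof
    fix p assume p: "p \<in> PI m n qd"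
    obtain j i k where pe: "p = (j,i,k)" by (cases p) auto
    then have "j<m" "i<n j" using p by (auto simp: PI_def)
    then show "Rop xh p = xs p" using cons[of j i p] p pe by (simp add: Rop_def)
  qed
  have HsEq: "Hset m n qd h \<Omega> (Rop xh) = Hset m n qd h \<Omega> xs" by (rule Hset_cong[OF Rxs])
  have Fb: "Fbold n f xh p = Fop n f xs p" if p: "p \<in> PI m n qd" for p
  proof -
    obtain j i k where pe: "p = (j,i,k)" by (cases p) auto
    then have j: "j<m" "i<n j" "k<qd j" using p by (auto simp: PI_def)
    have "pd (f j i') (estpt xh j i') p = pd (f j i') xs p" if i': "i' < n j" for i'
    proof -
      have est: "estpt xh j i' q = xs q" if q: "q \<in> PI m n qd" for q
      proof -
        obtain j2 i2 k2 where qe: "q = (j2,i2,k2)" by (cases q) auto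
        then have "j2<m" "i2<n j2" using q by (auto simp: PI_def)
        then show ?thesis using cons[of j i2 q] cons[of j i' q] q qe j i' by (auto simp: estpt_def)
      qed
      have "(\<lambda>t. f j i' ((estpt xh j i')(p := estpt xh j i' p + t))) = (\<lambda>t. f j i' (xs(p := xs p + t)))"
      proof
        fix t
        have "\<forall>q\<in>PI m n qd. ((estpt xh j i')(p := estpt xh j i' p + t)) q = (xs(p := xs p + t)) q"
          using est p by auto
        then show "f j i' ((estpt xh j i')(p := estpt xh j i' p + t)) = f j i' (xs(p := xs p + t))"
          using f_dep j(1) i' by blast
      qed
      then show ?thesis by (simp add: pd_def)
    qed
    then show ?thesis unfolding pe Fbold_def Fop_def by (auto intro!: sum.cong)
  qed
  have gHx: "g \<in> Hset m n qd h \<Omega> xs" using gH HsEq by simp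
  have LamT_AT: "LamT w A mu p = AT w A ms p" if "p \<in> PI m n qd" for p
  proof -
    obtain j i k where pe: "p = (j,i,k)" by (cases p) auto
    then have "j<m" using that by (auto simp: PI_def)
    then have "\<And>r. r<w \<Longrightarrow> mu (j,r) = ms r" using C2 by (auto simp: CW_def)
    then show ?thesis unfolding pe LamT_def AT_def by (auto intro!: sum.cong)
  qed
  have C6eq: "\<forall>p\<in>PI m n qd. Fop n f xs p + g p + Lop n W lam p + AT w A ms p = 0"
  proof
    fix p assume p: "p \<in> PI m n qd"
    obtain j i k where pe: "p = (j,i,k)" by (cases p) auto
    then have j: "j<m" "i<n j" using p by (auto simp: PI_def)
    then have "((j,i),p) \<in> EI m n qd" using p by (simp add: EI_def Ag_def)
    then have "RT (Fbold n f xh) (j,i) p + RT g (j,i) p + RT (Lop n W lam) (j,i) p + RT (LamT w A mu) (j,i) p = 0"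
      using C3 by blast
    then have "Fbold n f xh p + g p + Lop n W lam p + LamT w A mu p = 0" by (simp add: RT_def pe)
    then show "Fop n f xs p + g p + Lop n W lam p + AT w A ms p = 0" using Fb[OF p] LamT_AT[OF p] by simp
  qed
  have C6: "\<exists>g\<in>Hset m n qd h \<Omega> xs. \<forall>p\<in>PI m n qd.
          Fop n f xs p + g p + Lop n W lam p + AT w A ms p = 0" using gHx C6eq by blast
  have Aop_xs: "Aop m qd A (Rop xh) r = Aop m qd A xs r" for r
  proof -
    have "\<And>j k. j<m \<Longrightarrow> k<qd j \<Longrightarrow> Rop xh (j,0,k) = xs (j,0,k)"
      using Rxs nj by (auto simp: PI_def Suc_le_eq)
    then show ?thesis unfolding Aop_def by (auto intro!: sum.cong)
  qed
  have C7eq: "\<forall>r<w. bsum m b r - Aop m qd A xs r + vv r = 0" using C4eq Aop_xs by simp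
  have C7: "\<exists>v\<in>normal_cone {..<w} (orthant {..<w}) ms. \<forall>r<w.
          bsum m b r - Aop m qd A xs r + v r = 0" using vvN C7eq by blast
  have C8: "\<forall>p\<in>PI m n qd. Lop n W xs p = 0"
  proof
    fix p assume p: "p \<in> PI m n qd"
    obtain j i k where pe: "p = (j,i,k)" by (cases p) auto
    then have j: "j<m" "i<n j" "k<qd j" using p by (auto simp: PI_def)
    have "Lop n W xs p = Lop n W (Rop xh) p"
      unfolding pe Lop_def using Rxs j by (auto simp: PI_def intro!: sum.cong)
    then show "Lop n W xs p = 0" using C5 p by simp
  qed
  have xscl: "xs (j,i,k) = xs (j,0,k)" if "j<m" "i<n j" "k<qd j" for j i k
  proof -
    have "\<forall>i'<n j. (\<Sum>l<n j. lap (n j) (W j) i' l * xs (j,l,k)) = 0"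
    proof (intro allI impI)
      fix i' assume "i'<n j"
      then have "Lop n W xs (j,i',k) = 0" using C8 that by (simp add: PI_def)
      then show "(\<Sum>l<n j. lap (n j) (W j) i' l * xs (j,l,k)) = 0" by (simp add: Lop_def)
    qed
    moreover have "ugraph (n j) (W j)" "graph_connected (n j) (W j)" using graphs(1) connected(1) that by auto
    ultimately have "\<forall>a<n j. \<forall>l<n j. xs (j,a,k) = xs (j,l,k)" using lap_ker[of "n j" "W j" "\<lambda>l. xs (j,l,k)"] by blast
    moreover have "0 < n j" using nj that by (auto simp: Suc_le_eq)
    ultimately show ?thesis using that by blast
  qed
  have xsK: "xs \<in> Kset m n qd w A b \<Omega>"
    unfolding Kset_def
  proof (intro CollectI conjI allI impI)
    fix j i assume "j<m" "i<n j"
    then show "blk qd xs j i \<in> \<Omega> j i" using gHx by (simp add: Hset_def)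
  next
    fix r assume r: "r<w"
    define y where "y = ms(r := ms r + 1)"
    have "y \<in> orthant {..<w}" using msnn by (auto simp: y_def orthant_def)
    then have "(\<Sum>r'<w. vv r' * (y r' - ms r')) \<le> 0" using vvN by (simp add: normal_cone_def)
    moreover have "(\<Sum>r'<w. vv r' * (y r' - ms r')) = (\<Sum>r'<w. if r' = r then vv r else 0)"
      by (rule sum.cong) (auto simp: y_def)
    ultimately have "vv r \<le> 0" using r by (simp add: sum.delta)
    moreover have "bsum m b r - Aop m qd A xs r + vv r = 0" using C7eq r by blast
    ultimately show "Aop m qd A xs r \<le> bsum m b r" by linarith
  next
    fix j i l assume a: "j<m" "i<n j" "l<n j"
    show "blk qd xs j i = blk qd xs j l" unfolding blk_def
    proof (rule ext)
      fix k
      show "(if k < qd j then xs (j,i,k) else 0) = (if k < qd j then xs (j,l,k) else 0)"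
      proof (cases "k < qd j")
        case True
        then have "xs (j,i,k) = xs (j,0,k)" "xs (j,l,k) = xs (j,0,k)" using xscl a by blast+
        then show ?thesis by simp
      qed simp
    qed
  qed
  have compl: "(\<Sum>r<w. vv r * ms r) = 0"
  proof -
    have H: "\<forall>y\<in>orthant {..<w}. (\<Sum>a<w. vv a * (y a - ms a)) \<le> 0" using vvN by (simp add: normal_cone_def)
    have "(\<lambda>_. 0) \<in> orthant {..<w}" by (simp add: orthant_def)
    from H[rule_format, OF this] have "(\<Sum>r<w. vv r * (0 - ms r)) \<le> 0" by simp
    then have 1: "(\<Sum>r<w. vv r * ms r) \<ge> 0" by (simp add: sum_negf)
    have "(\<lambda>r. 2 * ms r) \<in> orthant {..<w}" using msnn by (simp add: orthant_def)
    from H[rule_format, OF this] have "(\<Sum>r<w. vv r * (2 * ms r - ms r)) \<le> 0" by simp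
    then have 2: "(\<Sum>r<w. vv r * ms r) \<le> 0" by simp
    show ?thesis using 1 2 by simp
  qed
  have GVI: "GVI_sol m n qd (Fop n f) (Hset m n qd h \<Omega>) (Kset m n qd w A b \<Omega>) xs"
    unfolding GVI_sol_def
  proof (intro conjI bexI[OF _ gHx] ballI)
    show "xs \<in> Kset m n qd w A b \<Omega>" by (rule xsK)
    fix x assume xK: "x \<in> Kset m n qd w A b \<Omega>"
    define d where "d p = x p - xs p" for p
    have xcl: "x (j,i,k) = x (j,0,k)" if "j<m" "i<n j" "k<qd j" for j i k
    proof -
      have "0 < n j" using nj that by (auto simp: Suc_le_eq)
      then have "blk qd x j i = blk qd x j 0" using xK that unfolding Kset_def by blast
      then show ?thesis using that unfolding blk_def by (metis (mono_tags))
    qed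
    have dcl: "d (j,i,k) = d (j,0,k)" if "j<m" "i<n j" "k<qd j" for j i k
      using xcl[OF that] xscl[OF that] by (simp add: d_def)
    have T1: "(\<Sum>p\<in>PI m n qd. Lop n W lam p * d p) = 0"
    proof -
      have "(\<Sum>i<n j. \<Sum>k<qd j. Lop n W lam (j,i,k) * d (j,i,k)) = 0" if j: "j<m" for j
      proof -
        have "(\<Sum>i<n j. \<Sum>k<qd j. Lop n W lam (j,i,k) * d (j,i,k))
            = (\<Sum>i<n j. \<Sum>k<qd j. \<Sum>l<n j. lap (n j) (W j) i l * (lam (j,l,k) * d (j,0,k)))"
        proof (intro sum.cong refl)
          fix i k assume "i \<in> {..<n j}" "k \<in> {..<qd j}"
          then have e: "d (j,i,k) = d (j,0,k)" using dcl j by blast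
          show "Lop n W lam (j,i,k) * d (j,i,k) = (\<Sum>l<n j. lap (n j) (W j) i l * (lam (j,l,k) * d (j,0,k)))"
            unfolding e by (simp add: Lop_def sum_distrib_right mult.assoc)
        qed
        also have "\<dots> = (\<Sum>k<qd j. \<Sum>i<n j. \<Sum>l<n j. lap (n j) (W j) i l * (lam (j,l,k) * d (j,0,k)))"
          by (rule sum.swap)
        also have "\<dots> = 0" using lap_colsum graphs(1) j by (simp)
        finally show ?thesis .
      qed
      then show ?thesis unfolding sum_PI by simp
    qed
    have T2: "(\<Sum>p\<in>PI m n qd. AT w A ms p * d p) = (\<Sum>r<w. ms r * (Aop m qd A x r - Aop m qd A xs r))"
    proof -
      have "(\<Sum>i<n j. \<Sum>k<qd j. AT w A ms (j,i,k) * d (j,i,k)) = (\<Sum>k<qd j. \<Sum>r<w. ms r * (A j r k * d (j,0,k)))"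
        if j: "j<m" for j
      proof -
        have "(\<Sum>i<n j. \<Sum>k<qd j. AT w A ms (j,i,k) * d (j,i,k))
            = (\<Sum>i<n j. if i = 0 then (\<Sum>k<qd j. (\<Sum>r<w. A j r k * ms r) * d (j,0,k)) else 0)"
          by (rule sum.cong) (auto simp: AT_def)
        also have "\<dots> = (\<Sum>k<qd j. (\<Sum>r<w. A j r k * ms r) * d (j,0,k))"
          using nj j by (simp add: sum_if0 Suc_le_eq)
        also have "\<dots> = (\<Sum>k<qd j. \<Sum>r<w. ms r * (A j r k * d (j,0,k)))"
          by (intro sum.cong refl) (simp add: sum_distrib_right sum_distrib_left mult_ac)
        finally show ?thesis .
      qed
      then have "(\<Sum>p\<in>PI m n qd. AT w A ms p * d p) = (\<Sum>j<m. \<Sum>k<qd j. \<Sum>r<w. ms r * (A j r k * d (j,0,k)))"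
        unfolding sum_PI by simp
      also have "\<dots> = (\<Sum>j<m. \<Sum>r<w. \<Sum>k<qd j. ms r * (A j r k * d (j,0,k)))"
        by (rule sum.cong[OF refl], rule sum.swap)
      also have "\<dots> = (\<Sum>r<w. \<Sum>j<m. \<Sum>k<qd j. ms r * (A j r k * d (j,0,k)))"
        by (rule sum.swap)
      also have "\<dots> = (\<Sum>r<w. ms r * (Aop m qd A x r - Aop m qd A xs r))"
        by (simp add: Aop_def d_def sum_distrib_left sum_subtractf right_diff_distrib)
      finally show ?thesis .
    qed
    have T2le: "(\<Sum>r<w. ms r * (Aop m qd A x r - Aop m qd A xs r)) \<le> 0"
    proof -
      have "(\<Sum>r<w. ms r * (Aop m qd A x r - Aop m qd A xs r))
          = (\<Sum>r<w. ms r * (Aop m qd A x r - bsum m b r)) - (\<Sum>r<w. vv r * ms r)"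
      proof -
        have "\<And>r. r<w \<Longrightarrow> Aop m qd A xs r = bsum m b r + vv r" using C7eq by force
        then show ?thesis by (auto simp: sum_subtractf[symmetric] algebra_simps intro!: sum.cong)
      qed
      also have "\<dots> = (\<Sum>r<w. ms r * (Aop m qd A x r - bsum m b r))" using compl by simp
      also have "\<dots> \<le> 0"
      proof (rule sum_nonpos)
        fix r assume "r \<in> {..<w}"
        then have "ms r \<ge> 0" "Aop m qd A x r \<le> bsum m b r" using msnn xK by (auto simp: Kset_def)
        then show "ms r * (Aop m qd A x r - bsum m b r) \<le> 0" by (simp add: mult_nonneg_nonpos)
      qed
      finally show ?thesis .
    qed
    have "ip (PI m n qd) (\<lambda>p. Fop n f xs p + g p) (\<lambda>p. x p - xs p)
        = (\<Sum>p\<in>PI m n qd. - (Lop n W lam p * d p) - AT w A ms p * d p)"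
      unfolding ip_def
    proof (rule sum.cong[OF refl])
      fix p assume pP: "p \<in> PI m n qd"
      have "Fop n f xs p + g p = - (Lop n W lam p + AT w A ms p)"
      proof -
        from pP have "Fop n f xs p + g p + Lop n W lam p + AT w A ms p = 0" using C6eq by blast
        then show ?thesis by linarith
      qed
      then have "(Fop n f xs p + g p) * (x p - xs p) = - (Lop n W lam p + AT w A ms p) * (x p - xs p)"
        by (simp only:)
      also have "\<dots> = - (Lop n W lam p * d p) - AT w A ms p * d p"
        by (simp add: d_def algebra_simps)
      finally show "(Fop n f xs p + g p) * (x p - xs p) = - (Lop n W lam p * d p) - AT w A ms p * d p" .
    qed
    also have "\<dots> = - (\<Sum>p\<in>PI m n qd. AT w A ms p * d p)"
      using T1 by (simp add: sum_subtractf sum_negf)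
    finally show "ip (PI m n qd) (\<lambda>p. Fop n f xs p + g p) (\<lambda>p. x p - xs p) \<ge> 0"
      using T2 T2le by simp
  qed
  have VG: "vGNE m n qd w f h \<Omega> A b xs" using GVI by (simp add: vGNE_def)
  have C3': "\<exists>g\<in>Hset m n qd h \<Omega> (Rop xh). \<forall>(a,p)\<in>EI m n qd.
          RT (Fbold n f xh) a p + RT g a p + RT (Lop n W lam) a p + RT (LamT w A mu) a p = 0"
    using gH C3 by blast
  show ?thesis
    apply (rule exI[of _ xs], rule exI[of _ ms])
    using C1 C2 C3' C4 C5 C6 C7 C8 GVI VG by (intro conjI)
qed

end
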